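(* Let $\mathcal{X}$ be a measurable space, let $(X,Y)$ be a random pair with $X\in\mathcal{X}$, $Y\in\mathbb{R}$, and let $D=(X_i,Y_i)_{i=1}^N$ be an i.i.d. sample distributed as $(X,Y)$. Let $F$ be a convex class of functions $\mathcal{X}\to\mathbb{R}$ (with $\mathbb{E}f^2(X)<\infty$ for $f\in F$, $\mathbb{E}Y^2<\infty$), and let $f^*\in F$ satisfy $f^*=\operatorname{argmin}_{f\in F}\mathbb{E}(f(X)-Y)^2$. Let $n$ divide $N$, $m=N/n$, and let $I_1,\dots,I_n$ be the natural decomposition of $\{1,\dots,N\}$ into consecutive blocks of cardinality $m$. For $f,h\in F$ and $1\le j\le n$ set $$\mathbb{Q}_{f,h}(j)=\frac1m\sum_{i\in I_j}(f-h)^2(X_i),\qquad \mathbb{M}_{f,h}(j)=\frac2m\sum_{i\in I_j}(f-h)(X_i)\,(h(X_i)-Y_i),$$ $$\mathbb{B}_{f,h}(j)=\frac1m\sum_{i\in I_j}(f(X_i)-Y_i)^2-\frac1m\sum_{i\in I_j}(h(X_i)-Y_i)^2=\mathbb{Q}_{f,h}(j)+\mathbb{M}_{f,h}(j).$$ Let $\widetilde f\in F$ be a minimizer over $F$ of $\phi(f)=\max_{g\in F}\mathrm{Med}(\mathbb{B}_{f,g})$, where $\mathrm{Med}(\mathbb{B}_{f,g})$ is a median of the vector $(\mathbb{B}_{f,g}(j))_{j=1}^n$. Let $r>0$ and $\gamma_1,\gamma_2>0$, and suppose the sample $D$ satisfies: (1) for every $f\in F$ with $\|f-f^*\|_{L_2}\ge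 r$, one has $\mathbb{B}_{f,f^*}(j)\ge\gamma_1\|f-f^*\|_{L_2}^2$ for at least $0.99n$ of the blocks $j$; (2) for every $f\in F$ with $\|f-f^*\|_{L_2}<r$, one has $|\mathbb{M}_{f,f^*}(j)-\mathbb{E}\mathbb{M}_{f,f^*}(j)|\le\gamma_2r^2$ for at least $0.99n$ of the blocks $j$. If $\gamma_1>\gamma_2$, then $$\mathbb{E}\big((\widetilde f(X)-Y)^2\,\big|\,D\big)\le\mathbb{E}(f^*(X)-Y)^2+(1+2\gamma_2)r^2.$$
   Context: $\|f\|_{L_2}=(\mathbb{E}f^2(X))^{1/2}$ with respect to the distribution of $X$. For a fixed (non-random) function $f$, $\mathbb{E}\mathbb{M}_{f,f^*}(j)=2\mathbb{E}\big[(f-f^* )(X)(f^*(X)-Y)\big]$; for the data-dependent $\widetilde f$, $\mathbb{E}(\cdot\mid D)$ denotes expectation over an independent copy $(X,Y)$ with $D$ fixed. *)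

theory Defs
  imports "HOL-Probability.Probability"
begin

definition block :: "nat \<Rightarrow> nat \<Rightarrow> nat \<Rightarrow> nat set" where
  "block N n j = {(j - 1) * (N div n) + 1 .. j * (N div n)}"

definition Qb :: "nat \<Rightarrow> nat \<Rightarrow> (nat \<Rightarrow> 'a) \<Rightarrow> (nat \<Rightarrow> real)
    \<Rightarrow> ('a \<Rightarrow> real) \<Rightarrow> ('a \<Rightarrow> real) \<Rightarrow> nat \<Rightarrow> real" where
  "Qb N n xs ys f h j = (1 / real (N div n)) * (\<Sum>i\<in>block N n j. (f (xs i) - h (xs i))^2)"

definition Mb :: "nat \<Rightarrow> nat \<Rightarrow> (nat \<Rightarrow> 'a) \<Rightarrow> (nat \<Rightarrow> real)
    \<Rightarrow> ('a \<Rightarrow> real) \<Rightarrow> ('a \<Rightarrow> real) \<Rightarrow> nat \<Rightarrow> real" where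
  "Mb N n xs ys f h j = (2 / real (N div n)) *
     (\<Sum>i\<in>block N n j. (f (xs i) - h (xs i)) * (h (xs i) - ys i))"

definition Bb :: "nat \<Rightarrow> nat \<Rightarrow> (nat \<Rightarrow> 'a) \<Rightarrow> (nat \<Rightarrow> real)
    \<Rightarrow> ('a \<Rightarrow> real) \<Rightarrow> ('a \<Rightarrow> real) \<Rightarrow> nat \<Rightarrow> real" where
  "Bb N n xs ys f h j = (1 / real (N div n)) * (\<Sum>i\<in>block N n j. (f (xs i) - ys i)^2)
     - (1 / real (N div n)) * (\<Sum>i\<in>block N n j. (h (xs i) - ys i)^2)"

definition is_median :: "nat \<Rightarrow> (nat \<Rightarrow> real) \<Rightarrow> real \<Rightarrow> bool" where
  "is_median n v t \<longleftrightarrow> 2 * card {j \<in> {1..n}. v j \<le> t} \<ge> n \<and> 2 * card {j \<in> {1..n}. t \<le> v j} \<ge> n"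

text \<open>L2 norm of f(X) w.r.t. the joint law P of (X,Y).\<close>
definition L2n :: "('a \<times> real) measure \<Rightarrow> ('a \<Rightarrow> real) \<Rightarrow> real" where
  "L2n P f = sqrt (\<integral>z. (f (fst z))^2 \<partial>P)"

text \<open>Expected value of M_{f,h}(j) for fixed f,h: 2 E[(f-h)(X)(h(X)-Y)].\<close>
definition EMb :: "('a \<times> real) measure \<Rightarrow> ('a \<Rightarrow> real) \<Rightarrow> ('a \<Rightarrow> real) \<Rightarrow> real" where
  "EMb P f h = 2 * (\<integral>z. (f (fst z) - h (fst z)) * (h (fst z) - snd z) \<partial>P)"

end

theory Submission
  imports Defs
begin

lemma L2_prod:
  fixes a b :: "'b \<Rightarrow> real"
  assumes "a \<in> borel_measurable M" "b \<in> borel_measurable M"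
    "integrable M (\<lambda>x. (a x)^2)" "integrable M (\<lambda>x. (b x)^2)"
  shows "integrable M (\<lambda>x. a x * b x)"
proof (rule Bochner_Integration.integrable_bound[where f="\<lambda>x. (a x)^2 + (b x)^2"])
  show "integrable M (\<lambda>x. (a x)^2 + (b x)^2)" using assms by simp
  show "(\<lambda>x. a x * b x) \<in> borel_measurable M" using assms by simp
  show "AE x in M. norm (a x * b x) \<le> norm ((a x)^2 + (b x)^2)"
  proof (rule AE_I2)
    fix x
    have "2 * \<bar>a x * b x\<bar> \<le> (a x)^2 + (b x)^2"
      using sum_squares_bound[of "\<bar>a x\<bar>" "\<bar>b x\<bar>"]
      by (simp add: abs_mult power2_eq_square)
    then show "norm (a x * b x) \<le> norm ((a x)^2 + (b x)^2)" by simp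
  qed
qed

lemma L2_diff:
  fixes a b :: "'b \<Rightarrow> real"
  assumes "a \<in> borel_measurable M" "b \<in> borel_measurable M"
    "integrable M (\<lambda>x. (a x)^2)" "integrable M (\<lambda>x. (b x)^2)"
  shows "integrable M (\<lambda>x. (a x - b x)^2)"
proof -
  have "integrable M (\<lambda>x. (a x)^2 - 2 * (a x * b x) + (b x)^2)"
    using L2_prod[OF assms] assms by simp
  moreover have "(\<lambda>x. (a x)^2 - 2 * (a x * b x) + (b x)^2) = (\<lambda>x. (a x - b x)^2)"
    by (rule ext) (simp add: power2_diff)
  ultimately show ?thesis by simp
qed

lemma expand_sq:
  fixes u w :: "'b \<Rightarrow> real"
  assumes "u \<in> borel_measurable M" "w \<in> borel_measurable M"
    "integrable M (\<lambda>x. (u x)^2)" "integrable M (\<lambda>x. (w x)^2)"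
  shows "(\<integral>x. (w x + t * u x)^2 \<partial>M) = (\<integral>x. (w x)^2 \<partial>M) + 2*t*(\<integral>x. u x * w x \<partial>M)
           + t^2 * (\<integral>x. (u x)^2 \<partial>M)"
proof -
  have p: "integrable M (\<lambda>x. u x * w x)" using L2_prod[OF assms] .
  have "(\<lambda>x. (w x + t * u x)^2) = (\<lambda>x. (w x)^2 + (2*t*(u x * w x) + t^2*(u x)^2))"
    by (rule ext) (simp add: power2_eq_square algebra_simps)
  then have "(\<integral>x. (w x + t * u x)^2 \<partial>M) = (\<integral>x. (w x)^2 + (2*t*(u x * w x) + t^2*(u x)^2) \<partial>M)"
    by simp
  also have "\<dots> = (\<integral>x. (w x)^2 \<partial>M) + ((\<integral>x. 2*t*(u x * w x) \<partial>M) + (\<integral>x. t^2*(u x)^2 \<partial>M))"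
    using p assms by (simp add: Bochner_Integration.integral_add)
  also have "\<dots> = (\<integral>x. (w x)^2 \<partial>M) + 2*t*(\<integral>x. u x * w x \<partial>M) + t^2 * (\<integral>x. (u x)^2 \<partial>M)"
    by simp
  finally show ?thesis .
qed

lemma quad_nonneg:
  fixes A B :: real
  assumes h: "\<And>t. 0 < t \<Longrightarrow> t \<le> 1 \<Longrightarrow> 0 \<le> 2*t*A + t^2*B" and B: "B \<ge> 0"
  shows "A \<ge> 0"
proof (rule ccontr)
  assume "\<not> A \<ge> 0" then have A: "A < 0" by simp
  show False
  proof (cases "B \<le> - A")
    case True
    have "0 \<le> 2*1*A + 1^2*B" using h[of 1] by simp
    then show False using True A by simp
  next
    case False
    define t where "t = -A/B"
    have Bp: "B > 0" using False A by simp
    have t0: "0 < t" "t \<le> 1" using A Bp False by (auto simp: t_def field_simps)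
    have "t^2*B = -(t*A)" using Bp by (simp add: t_def power2_eq_square)
    then have "2*t*A + t^2*B = t*A" by linarith
    moreover have "t*A < 0" using t0 A by (simp add: mult_pos_neg)
    ultimately show False using h[OF t0] by linarith
  qed
qed

lemma count_contra:
  fixes n :: nat
  assumes "real (card {j\<in>{1..n}. P j}) \<ge> 0.99 * real n" "n > 0"
    "2 * card {j\<in>{1..n}. Q j} \<ge> n" "\<And>j. j\<in>{1..n} \<Longrightarrow> Q j \<Longrightarrow> \<not> P j"
  shows False
proof -
  have "card ({j\<in>{1..n}. Q j} \<union> {j\<in>{1..n}. P j}) = card {j\<in>{1..n}. Q j} + card {j\<in>{1..n}. P j}"
    by (rule card_Un_disjoint) (use assms(4) in auto)
  moreover have "card ({j\<in>{1..n}. Q j} \<union> {j\<in>{1..n}. P j}) \<le> card {1..n}"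
    by (rule card_mono) auto
  ultimately have "card {j\<in>{1..n}. Q j} + card {j\<in>{1..n}. P j} \<le> n" by simp
  then have "real (card {j\<in>{1..n}. Q j}) + real (card {j\<in>{1..n}. P j}) \<le> real n"
    by linarith
  moreover have "2 * real (card {j\<in>{1..n}. Q j}) \<ge> real n" using assms(3) by linarith
  ultimately show False using assms(1,2) by simp
qed

lemma Bb_anti: "Bb N n xs ys f g j = - Bb N n xs ys g f j"
  by (simp add: Bb_def)

lemma Bb_ge_Mb: "Bb N n xs ys f g j \<ge> Mb N n xs ys f g j"
proof -
  define m where "m = real (N div n)"
  have m0: "m \<ge> 0" by (simp add: m_def)
  have "Bb N n xs ys f g j = (1/m) * (\<Sum>i\<in>block N n j. (f (xs i) - ys i)^2 - (g (xs i) - ys i)^2)"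
    by (simp add: Bb_def m_def sum_subtractf right_diff_distrib)
  also have "\<dots> = (1/m) * (\<Sum>i\<in>block N n j. (f (xs i) - g (xs i))^2 + 2 * ((f (xs i) - g (xs i)) * (g (xs i) - ys i)))"
    by (rule arg_cong[where f="\<lambda>s. (1/m) * s"], rule sum.cong) (simp_all add: power2_eq_square algebra_simps)
  also have "\<dots> = (1/m) * (\<Sum>i\<in>block N n j. (f (xs i) - g (xs i))^2) + Mb N n xs ys f g j"
  proof -
    have "(\<Sum>i\<in>block N n j. (f (xs i) - g (xs i))^2 + 2 * ((f (xs i) - g (xs i)) * (g (xs i) - ys i)))
      = (\<Sum>i\<in>block N n j. (f (xs i) - g (xs i))^2) + 2 * (\<Sum>i\<in>block N n j. (f (xs i) - g (xs i)) * (g (xs i) - ys i))"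
      by (simp add: sum.distrib sum_distrib_left)
    then show ?thesis by (simp add: Mb_def m_def algebra_simps)
  qed
  also have "\<dots> \<ge> Mb N n xs ys f g j"
    using m0 by (simp add: sum_nonneg)
  finally show ?thesis .
qed

theorem theorem1:
  fixes SX :: "'a measure" and P :: "('a \<times> real) measure"
    and F :: "('a \<Rightarrow> real) set" and fstar ftil :: "'a \<Rightarrow> real"
    and N n :: nat and xs :: "nat \<Rightarrow> 'a" and ys :: "nat \<Rightarrow> real"
    and med :: "('a \<Rightarrow> real) \<Rightarrow> ('a \<Rightarrow> real) \<Rightarrow> real"
    and r \<gamma>1 \<gamma>2 :: real
  assumes P_prob: "prob_space P"
    and P_sets: "sets P = sets (SX \<Otimes>\<^sub>M borel)"
    and F_meas: "\<And>f. f \<in> F \<Longrightarrow> f \<in> borel_measurable SX"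
    and F_convex: "\<And>f g t. f \<in> F \<Longrightarrow> g \<in> F \<Longrightarrow> 0 \<le> t \<Longrightarrow> t \<le> 1
                     \<Longrightarrow> (\<lambda>x. t * f x + (1 - t) * g x) \<in> F"
    and F_L2: "\<And>f. f \<in> F \<Longrightarrow> integrable P (\<lambda>z. (f (fst z))^2)"
    and Y_L2: "integrable P (\<lambda>z. (snd z)^2)"
    and fstar_in: "fstar \<in> F"
    and fstar_min: "\<And>f. f \<in> F \<Longrightarrow>
          (\<integral>z. (fstar (fst z) - snd z)^2 \<partial>P) \<le> (\<integral>z. (f (fst z) - snd z)^2 \<partial>P)"
    and sample: "\<And>i. i \<in> {1..N} \<Longrightarrow> xs i \<in> space SX"
    and n_pos: "0 < n" and N_pos: "0 < N" and n_dvd: "n dvd N"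
    and med_is: "\<And>f g. f \<in> F \<Longrightarrow> g \<in> F \<Longrightarrow> is_median n (Bb N n xs ys f g) (med f g)"
    and ftil_in: "ftil \<in> F"
    and ftil_min: "\<And>h. h \<in> F \<Longrightarrow>
          (SUP g\<in>F. ereal (med ftil g)) \<le> (SUP g\<in>F. ereal (med h g))"
    and r_pos: "0 < r" and g1_pos: "0 < \<gamma>1" and g2_pos: "0 < \<gamma>2"
    and cond1: "\<And>f. f \<in> F \<Longrightarrow> L2n P (\<lambda>x. f x - fstar x) \<ge> r \<Longrightarrow>
          real (card {j \<in> {1..n}. Bb N n xs ys f fstar j \<ge> \<gamma>1 * (L2n P (\<lambda>x. f x - fstar x))^2})
            \<ge> 0.99 * real n"
    and cond2: "\<And>f. f \<in> F \<Longrightarrow> L2n P (\<lambda>x. f x - fstar x) < r \<Longrightarrow>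
          real (card {j \<in> {1..n}. \<bar>Mb N n xs ys f fstar j - EMb P f fstar\<bar> \<le> \<gamma>2 * r^2})
            \<ge> 0.99 * real n"
    and gam: "\<gamma>1 > \<gamma>2"
  shows "(\<integral>z. (ftil (fst z) - snd z)^2 \<partial>P)
           \<le> (\<integral>z. (fstar (fst z) - snd z)^2 \<partial>P) + (1 + 2 * \<gamma>2) * r^2"
proof -
  have measF: "\<And>f. f \<in> F \<Longrightarrow> (\<lambda>z. f (fst z)) \<in> borel_measurable P"
  proof -
    fix f assume "f \<in> F"
    then have "(\<lambda>z. f (fst z)) \<in> borel_measurable (SX \<Otimes>\<^sub>M borel)"
      using F_meas by (intro measurable_compose[OF measurable_fst]) auto
    then show "(\<lambda>z. f (fst z)) \<in> borel_measurable P"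
      unfolding measurable_cong_sets[OF P_sets refl] .
  qed
  have measY: "(\<lambda>z. snd z) \<in> borel_measurable P"
  proof -
    have "(\<lambda>z. snd z) \<in> borel_measurable (SX \<Otimes>\<^sub>M borel)" by simp
    then show ?thesis unfolding measurable_cong_sets[OF P_sets refl] .
  qed
  have fsm: "(\<lambda>z. fstar (fst z)) \<in> borel_measurable P" using measF fstar_in by simp
  have wm: "(\<lambda>z. fstar (fst z) - snd z) \<in> borel_measurable P" using fsm measY by simp
  have wi: "integrable P (\<lambda>z. (fstar (fst z) - snd z)^2)"
    using L2_diff[OF fsm measY F_L2[OF fstar_in] Y_L2] .
  have um: "\<And>g. g \<in> F \<Longrightarrow> (\<lambda>z. g (fst z) - fstar (fst z)) \<in> borel_measurable P"
    using measF fsm by simp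
  have ui: "\<And>g. g \<in> F \<Longrightarrow> integrable P (\<lambda>z. (g (fst z) - fstar (fst z))^2)"
    using L2_diff measF fsm F_L2 fstar_in by blast
  have expand: "\<And>g t. g \<in> F \<Longrightarrow> (\<integral>z. (fstar (fst z) - snd z + t * (g (fst z) - fstar (fst z)))^2 \<partial>P)
      = (\<integral>z. (fstar (fst z) - snd z)^2 \<partial>P) + t * EMb P g fstar + t^2 * (\<integral>z. (g (fst z) - fstar (fst z))^2 \<partial>P)"
  proof -
    fix g t assume g: "g \<in> F"
    show "(\<integral>z. (fstar (fst z) - snd z + t * (g (fst z) - fstar (fst z)))^2 \<partial>P)
      = (\<integral>z. (fstar (fst z) - snd z)^2 \<partial>P) + t * EMb P g fstar + t^2 * (\<integral>z. (g (fst z) - fstar (fst z))^2 \<partial>P)" using expand_sq[OF um[OF g] wm ui[OF g] wi, of t] by (simp add: EMb_def)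
  qed
  have Bnn: "\<And>g. (\<integral>z. (g (fst z) - fstar (fst z))^2 \<partial>P) \<ge> 0" by simp
  have FOC: "\<And>g. g \<in> F \<Longrightarrow> EMb P g fstar \<ge> 0"
  proof -
    fix g assume g: "g \<in> F"
    have "0 \<le> EMb P g fstar / 2"
    proof (rule quad_nonneg[OF _ Bnn])
      fix t :: real assume t: "0 < t" "t \<le> 1"
      have "(\<lambda>x. t * g x + (1 - t) * fstar x) \<in> F" using F_convex g fstar_in t by simp
      then have "(\<integral>z. (fstar (fst z) - snd z)^2 \<partial>P) \<le> (\<integral>z. (t * g (fst z) + (1 - t) * fstar (fst z) - snd z)^2 \<partial>P)"
        using fstar_min by force
      also have "(\<lambda>z. t * g (fst z) + (1 - t) * fstar (fst z) - snd z) = (\<lambda>z. fstar (fst z) - snd z + t * (g (fst z) - fstar (fst z)))"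
        by (rule ext) (simp add: algebra_simps)
      finally show "0 \<le> 2*t*(EMb P g fstar / 2) + t^2 * (\<integral>z. (g (fst z) - fstar (fst z))^2 \<partial>P)"
        using expand[OF g, of t] by simp
    qed
    then show "EMb P g fstar \<ge> 0" by simp
  qed
  have r2: "r^2 > 0" using r_pos by simp
  have phi_star: "\<And>g. g \<in> F \<Longrightarrow> med fstar g \<le> \<gamma>2 * r^2"
  proof (rule ccontr)
    fix g assume g: "g \<in> F" and c: "\<not> med fstar g \<le> \<gamma>2 * r^2"
    have mm: "2 * card {j\<in>{1..n}. med fstar g \<le> Bb N n xs ys fstar g j} \<ge> n"
      using med_is[OF fstar_in g] by (simp add: is_median_def)
    show False
    proof (cases "L2n P (\<lambda>x. g x - fstar x) \<ge> r")
      case True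
      show False
      proof (rule count_contra[OF cond1[OF g True] n_pos mm])
        fix j assume "med fstar g \<le> Bb N n xs ys fstar g j"
        then show "\<not> \<gamma>1 * (L2n P (\<lambda>x. g x - fstar x))\<^sup>2 \<le> Bb N n xs ys g fstar j"
        proof -
          have "\<gamma>1 * (L2n P (\<lambda>x. g x - fstar x))\<^sup>2 \<ge> 0" using g1_pos by simp
          moreover have "\<gamma>2 * r^2 > 0" using g2_pos r2 by simp
          ultimately show ?thesis using \<open>med fstar g \<le> Bb N n xs ys fstar g j\<close> c Bb_anti[of N n xs ys fstar g j]
            by linarith
        qed
      qed
    next
      case False
      then have lt: "L2n P (\<lambda>x. g x - fstar x) < r" by simp
      show False
      proof (rule count_contra[OF cond2[OF g lt] n_pos mm])
        fix j assume "med fstar g \<le> Bb N n xs ys fstar g j"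
        then show "\<not> \<bar>Mb N n xs ys g fstar j - EMb P g fstar\<bar> \<le> \<gamma>2 * r^2"
          using c FOC[OF g] Bb_anti[of N n xs ys fstar g j] Bb_ge_Mb[of N n xs ys g fstar j]
          by linarith
      qed
    qed
  qed
  have "(SUP g\<in>F. ereal (med fstar g)) \<le> ereal (\<gamma>2 * r^2)"
    by (rule SUP_least) (simp add: phi_star)
  then have til: "med ftil fstar \<le> \<gamma>2 * r^2"
    using ftil_min[OF fstar_in] SUP_upper[OF fstar_in, of "\<lambda>g. ereal (med ftil g)"]
  proof -
    have "ereal (med ftil fstar) \<le> ereal (\<gamma>2 * r^2)"
      using ftil_min[OF fstar_in] SUP_upper[OF fstar_in, of "\<lambda>g. ereal (med ftil g)"]
        \<open>(SUP g\<in>F. ereal (med fstar g)) \<le> ereal (\<gamma>2 * r^2)\<close> by (meson order_trans)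
    then show ?thesis by simp
  qed
  have mt: "2 * card {j\<in>{1..n}. Bb N n xs ys ftil fstar j \<le> med ftil fstar} \<ge> n"
    using med_is[OF ftil_in fstar_in] by (simp add: is_median_def)
  define d where "d = L2n P (\<lambda>x. ftil x - fstar x)"
  have dlt: "d < r"
  proof (rule ccontr)
    assume "\<not> d < r" then have dr: "d \<ge> r" by simp
    then have "r^2 \<le> d^2" using r_pos by (simp add: power_mono)
    moreover have "\<gamma>2 * r^2 < \<gamma>1 * r^2" using mult_strict_right_mono[OF gam r2] .
    ultimately have "\<gamma>2 * r^2 < \<gamma>1 * d^2" using mult_left_mono[of "r^2" "d^2" \<gamma>1] g1_pos
      by linarith
    show False
    proof (rule count_contra[OF cond1[OF ftil_in dr[unfolded d_def]] n_pos mt])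
      fix j assume "Bb N n xs ys ftil fstar j \<le> med ftil fstar"
      then show "\<not> \<gamma>1 * (L2n P (\<lambda>x. ftil x - fstar x))\<^sup>2 \<le> Bb N n xs ys ftil fstar j"
        using til \<open>\<gamma>2 * r^2 < \<gamma>1 * d^2\<close> by (simp add: d_def)
    qed
  qed
  have EMle: "EMb P ftil fstar \<le> 2 * \<gamma>2 * r^2"
  proof (rule ccontr)
    assume c: "\<not> EMb P ftil fstar \<le> 2 * \<gamma>2 * r^2"
    show False
    proof (rule count_contra[OF cond2[OF ftil_in dlt[unfolded d_def]] n_pos mt])
      fix j assume "Bb N n xs ys ftil fstar j \<le> med ftil fstar"
      then show "\<not> \<bar>Mb N n xs ys ftil fstar j - EMb P ftil fstar\<bar> \<le> \<gamma>2 * r^2"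
        using c til Bb_ge_Mb[of N n xs ys ftil fstar j] by linarith
    qed
  qed
  have d2: "d^2 = (\<integral>z. (ftil (fst z) - fstar (fst z))^2 \<partial>P)"
    unfolding d_def L2n_def using Bnn[of ftil] by simp
  have "d \<ge> 0" unfolding d_def L2n_def by simp
  then have "d^2 < r^2" using dlt by (simp add: power_strict_mono)
  have "(\<lambda>z. ftil (fst z) - snd z) = (\<lambda>z. fstar (fst z) - snd z + 1 * (ftil (fst z) - fstar (fst z)))"
    by (rule ext) simp
  then have "(\<integral>z. (ftil (fst z) - snd z)^2 \<partial>P) = (\<integral>z. (fstar (fst z) - snd z)^2 \<partial>P) + EMb P ftil fstar + d^2"
    using expand[OF ftil_in, of 1] d2 by simp
  then show ?thesis using EMle \<open>d^2 < r^2\<close> by (simp add: algebra_simps)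
qed

end
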